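(* Let $C_6=\langle a\mid a^6=e\rangle$ and $\Delta=\{a,a^{-1},a^2,a^{-2}\}$ (so $C_\Delta(C_6)$ is the Johnson graph $J(4,2)$). Then $W=W_{a}U_{a}+W_{a^{-1}}U_{a^{-1}}+W_{a^2}U_{a^2}+W_{a^{-2}}U_{a^{-2}}$ is a homogeneous scalar quantum walk on $C_\Delta(C_6)$ if and only if, up to a global phase, $W_a=\tfrac12e^{i\phi}$, $W_{a^{-1}}=\tfrac12$, $W_{a^2}=\tfrac{(-1)^q}{2}$, $W_{a^{-2}}=\tfrac{(-1)^{q+1}}{2}e^{i\phi}$ for some real $\phi$ and some integer $q$.
   Context: The Cayley graph $C_\Delta(\Gamma)$ has vertex set $\Gamma$ and directed edges $(g,g\delta)$, $g\in\Gamma,\delta\in\Delta$. Let $\ell^2(\Gamma)$ have orthonormal basis $\{|g\rangle\}_{g\in\Gamma}$ and for $\delta\in\Gamma$ let $U_\delta|g\rangle=|g\delta\rangle$. A homogeneous scalar quantum walk on $C_\Delta(\Gamma)$ is a unitary operator $W=\sum_{\delta\in\Delta}W_\delta U_\delta$ with all complex coefficients $W_\delta$ nonzero. "Up to a global phase" means that all coefficients may be multiplied by a common complex number of modulus one. The Johnson graph $J(n,k)$ has as vertices the $k$-element subsets of an $n$-element set, two subsets being adjacent when they share $k-1$ elements. *)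

theory Defs
  imports "HOL-Analysis.Analysis" "HOL-Library.Numeral_Type"
begin

text \<open>The cyclic group C_6 is modelled by the numeral type 6 (integers mod 6, written
additively); the generator a is 1, a^k is k, a^{-1} is -1.  The Hilbert space l^2(C_6)
is complex^6, with |g> the g-th standard basis vector; operators are complex^6^6 matrices
(column g is the image of |g>).\<close>

definition shift_op :: "6 \<Rightarrow> complex^6^6" where
  "shift_op d = (\<chi> h g. if h = g + d then 1 else 0)"

definition walk_op :: "6 set \<Rightarrow> (6 \<Rightarrow> complex) \<Rightarrow> complex^6^6" where
  "walk_op D W = (\<chi> h g. \<Sum>d\<in>D. W d * (shift_op d $ h $ g))"

definition adjoint_mat :: "complex^6^6 \<Rightarrow> complex^6^6" where
  "adjoint_mat M = (\<chi> i j. cnj (M $ j $ i))"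

definition unitary_mat :: "complex^6^6 \<Rightarrow> bool" where
  "unitary_mat M \<longleftrightarrow> adjoint_mat M ** M = mat 1 \<and> M ** adjoint_mat M = mat 1"

definition homogeneous_scalar_qw :: "6 set \<Rightarrow> (6 \<Rightarrow> complex) \<Rightarrow> bool" where
  "homogeneous_scalar_qw D W \<longleftrightarrow> (\<forall>d\<in>D. W d \<noteq> 0) \<and> unitary_mat (walk_op D W)"

end

theory Submission
  imports Defs
begin

lemma exhaust_6:
  fixes x :: 6
  shows "x = 0 \<or> x = 1 \<or> x = 2 \<or> x = 3 \<or> x = 4 \<or> x = 5"
proof (induct x)
  case (of_int z)
  then have "z = 0 \<or> z = 1 \<or> z = 2 \<or> z = 3 \<or> z = 4 \<or> z = 5" by fastforce
  then show ?case by auto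
qed
lemma UNIV_6: "(UNIV::6 set) = {0,1,2,3,4,5}"
  using exhaust_6 by auto

lemma walk_entry: "walk_op D W $ h $ g = (if h - g \<in> D then W (h - g) else 0)"
proof -
  have "walk_op D W $ h $ g = (\<Sum>d\<in>D. if d = h - g then W d else 0)"
    unfolding walk_op_def shift_op_def by (auto intro!: sum.cong simp: algebra_simps)
  also have "\<dots> = (if h - g \<in> D then W (h - g) else 0)"
    by simp
  finally show ?thesis .
qed

definition wf :: "(6 \<Rightarrow> complex) \<Rightarrow> 6 \<Rightarrow> complex" where
  "wf W k = (if k \<in> {1,-1,2,-2} then W k else 0)"

definition R :: "(6 \<Rightarrow> complex) \<Rightarrow> 6 \<Rightarrow> complex" where
  "R W s = (\<Sum>t\<in>UNIV. cnj (wf W t) * wf W (t + s))"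

lemma sum_shift: "(\<Sum>k\<in>UNIV. f k) = (\<Sum>t\<in>(UNIV::6 set). f (t + i))"
proof -
  have "inj (\<lambda>t::6. t + i)" by (simp add: inj_def)
  moreover have "range (\<lambda>t::6. t + i) = UNIV" by (metis surj_def diff_add_cancel)
  ultimately show ?thesis using sum.reindex[of "\<lambda>t::6. t + i" UNIV f] by simp
qed

lemma AM: "(adjoint_mat (walk_op {1,-1,2,-2} W) ** walk_op {1,-1,2,-2} W) $ i $ j = R W (i - j)"
proof -
  have "(adjoint_mat (walk_op {1,-1,2,-2} W) ** walk_op {1,-1,2,-2} W) $ i $ j
     = (\<Sum>k\<in>UNIV. cnj (wf W (k - i)) * wf W (k - j))"
    by (simp add: matrix_matrix_mult_def adjoint_mat_def walk_entry wf_def)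
  also have "\<dots> = (\<Sum>t\<in>UNIV. cnj (wf W (t + i - i)) * wf W (t + i - j))"
    by (rule sum_shift)
  finally show ?thesis by (simp add: R_def algebra_simps)
qed

lemma MA: "(walk_op {1,-1,2,-2} W ** adjoint_mat (walk_op {1,-1,2,-2} W)) $ i $ j = R W (i - j)"
proof -
  have "(walk_op {1,-1,2,-2} W ** adjoint_mat (walk_op {1,-1,2,-2} W)) $ i $ j
     = (\<Sum>k\<in>UNIV. wf W (i - k) * cnj (wf W (j - k)))"
    by (simp add: matrix_matrix_mult_def adjoint_mat_def walk_entry wf_def)
  also have "\<dots> = (\<Sum>t\<in>UNIV. wf W (i - (t + j)) * cnj (wf W (j - (t + j))))"
    by (rule sum_shift)
  also have "\<dots> = (\<Sum>t\<in>UNIV. wf W (- t + (i - j)) * cnj (wf W (- t)))"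
    by (simp add: algebra_simps)
  also have "\<dots> = (\<Sum>t\<in>UNIV. wf W (t + (i - j)) * cnj (wf W t))"
    by (rule sum.reindex_bij_witness[of _ uminus uminus]) auto
  finally show ?thesis by (simp add: R_def algebra_simps)
qed

lemma sum6: "(\<Sum>t\<in>UNIV. f t) = f (0::6) + f 1 + f 2 + f 3 + f 4 + (f 5::complex)" 
  by (subst UNIV_6) (simp add: algebra_simps)
lemma num6: "(6::6) = 0" "(7::6) = 1" "(8::6) = 2" "(9::6) = 3" "(10::6) = 4"
  by simp_all

lemma R_vals:
  "R W 0 = cnj (W 1) * W 1 + cnj (W 5) * W 5 + cnj (W 2) * W 2 + cnj (W 4) * W 4"
  "R W 1 = cnj (W 1) * W 2 + cnj (W 4) * W 5"
  "R W 2 = cnj (W 5) * W 1 + cnj (W 2) * W 4"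
  "R W 3 = cnj (W 1) * W 4 + cnj (W 2) * W 5 + cnj (W 4) * W 1 + cnj (W 5) * W 2"
  "R W 4 = cnj (R W 2)"
  "R W 5 = cnj (R W 1)"
  apply (simp_all only: R_def sum6) apply (simp_all add: wf_def num6) done

lemma unitary_iff:
  "unitary_mat (walk_op {1,-1,2,-2} W) \<longleftrightarrow> (\<forall>s. R W s = (if s = 0 then 1 else 0))"
proof
  assume u: "unitary_mat (walk_op {1,-1,2,-2} W)"
  show "\<forall>s. R W s = (if s = 0 then 1 else 0)"
  proof
    fix s
    have "(adjoint_mat (walk_op {1,-1,2,-2} W) ** walk_op {1,-1,2,-2} W) $ s $ 0 = mat 1 $ s $ 0"
      using u unfolding unitary_mat_def by simp
    then show "R W s = (if s = 0 then 1 else 0)" by (simp add: AM mat_def)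
  qed
next
  assume h: "\<forall>s. R W s = (if s = 0 then 1 else 0)"
  show "unitary_mat (walk_op {1,-1,2,-2} W)"
    unfolding unitary_mat_def
    by (auto simp: vec_eq_iff AM MA h mat_def)
qed

lemma unitary_iff2:
  "unitary_mat (walk_op {1,-1,2,-2} W) \<longleftrightarrow>
    (R W 0 = 1 \<and> R W 1 = 0 \<and> R W 2 = 0 \<and> R W 3 = 0)"
proof -
  have "(\<forall>s. R W s = (if s = 0 then 1 else 0)) \<longleftrightarrow>
    (R W 0 = 1 \<and> R W 1 = 0 \<and> R W 2 = 0 \<and> R W 3 = 0 \<and> R W 4 = 0 \<and> R W 5 = 0)"
  proof
    assume "\<forall>s. R W s = (if s = 0 then 1 else 0)"
    then show "R W 0 = 1 \<and> R W 1 = 0 \<and> R W 2 = 0 \<and> R W 3 = 0 \<and> R W 4 = 0 \<and> R W 5 = 0"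
      by simp
  next
    assume h: "R W 0 = 1 \<and> R W 1 = 0 \<and> R W 2 = 0 \<and> R W 3 = 0 \<and> R W 4 = 0 \<and> R W 5 = 0"
    show "\<forall>s. R W s = (if s = 0 then 1 else 0)"
    proof
      fix s :: 6
      show "R W s = (if s = 0 then 1 else 0)"
        using exhaust_6[of s] h by auto
    qed
  qed
  also have "\<dots> \<longleftrightarrow> (R W 0 = 1 \<and> R W 1 = 0 \<and> R W 2 = 0 \<and> R W 3 = 0)"
    by (auto simp only: R_vals(5,6) complex_cnj_zero_iff)
  finally show ?thesis using unitary_iff by simp
qed

lemma alg_fwd:
  fixes a b c e :: complex
  assumes nz: "a \<noteq> 0" "b \<noteq> 0" "c \<noteq> 0" "e \<noteq> 0"
    and R0: "cnj a * a + cnj b * b + cnj c * c + cnj e * e = 1"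
    and R1: "cnj a * c + cnj e * b = 0"
    and R2: "cnj b * a + cnj c * e = 0"
    and R3: "cnj a * e + cnj c * b + cnj e * a + cnj b * c = 0"
  shows "\<exists>z::complex. cmod z = 1 \<and> (\<exists>(\<phi>::real) (q::int).
       a = z * (exp (\<i> * of_real \<phi>) / 2) \<and>
       b = z * (1 / 2) \<and>
       c = z * ((-1) powi q / 2) \<and>
       e = z * ((-1) powi (q + 1) / 2 * exp (\<i> * of_real \<phi>)))"
proof -
  have R1c: "a * cnj c + e * cnj b = 0" using arg_cong[OF R1, of cnj] by simp
  have "a * (cnj b * a + cnj c * e) = 0" using R2 by simp
  hence "cnj b * (a * a) + e * (a * cnj c) = 0" by (simp add: algebra_simps)
  moreover have "a * cnj c = - (e * cnj b)" using R1c by (simp add: eq_neg_iff_add_eq_0)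
  ultimately have "cnj b * (a * a) + e * (- (e * cnj b)) = 0" by simp
  hence "cnj b * (a * a) - cnj b * (e * e) = 0" by (simp add: algebra_simps)
  hence "cnj b * (a * a - e * e) = 0" by (simp add: algebra_simps)
  hence "a * a = e * e" using nz by simp
  hence "(a - e) * (a + e) = 0" by (simp add: algebra_simps)
  hence ea: "e = a \<or> e = -a" by (auto simp: add_eq_0_iff)
  obtain v :: complex where v: "v = 1 \<or> v = -1" "e = v * a" "c = - v * b"
  proof (cases "e = a")
    case True
    with R1 have "cnj a * (c + b) = 0" by (simp add: algebra_simps)
    hence "c = - b" using nz by (simp add: add_eq_0_iff)
    thus ?thesis using that[of 1] True by simp
  next
    case False
    hence ee: "e = -a" using ea by simp
    with R1 have "cnj a * (c - b) = 0" by (simp add: algebra_simps)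
    hence "c = b" using nz by simp
    thus ?thesis using that[of "-1"] ee by simp
  qed
  have vc: "cnj v = v" using v(1) by auto
  have "v * (2 * (cnj a * a) - 2 * (cnj b * b)) = 0"
    using R3 unfolding v(2,3) using v(1) by (auto simp: algebra_simps)
  hence ab: "cnj a * a = cnj b * b" using v(1) by auto
  have "cnj a * a + cnj b * b + cnj b * b + cnj a * a = 1"
    using R0 unfolding v(2,3) using v(1) by (auto simp: algebra_simps)
  hence bb: "cnj b * b = 1/4" using ab by (simp add: mult.commute)
  have nb2: "complex_of_real ((cmod b)^2) = b * cnj b" by (rule complex_norm_square)
  have na2: "complex_of_real ((cmod a)^2) = a * cnj a" by (rule complex_norm_square)
  have "complex_of_real ((cmod b)^2) = 1/4" using bb nb2
    by (metis mult.commute)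
  hence "complex_of_real ((cmod b)^2) = complex_of_real (1/4)" by simp
  hence "(cmod b)^2 = (1/2)^2" unfolding of_real_eq_iff by (simp add: power2_eq_square)
  hence nb: "cmod b = 1/2"
    by (rule power2_eq_imp_eq) auto
  have "complex_of_real ((cmod a)^2) = complex_of_real ((cmod b)^2)" using ab nb2 na2
    by (metis mult.commute)
  hence "(cmod a)^2 = (cmod b)^2" unfolding of_real_eq_iff .
  hence "cmod a = cmod b"
    by (rule power2_eq_imp_eq) auto
  hence nab: "cmod (a / b) = 1" using nz by (simp add: norm_divide)
  define \<phi> where "\<phi> = Arg (a / b)"
  have E: "exp (\<i> * of_real \<phi>) = a / b"
    unfolding \<phi>_def using cis_Arg[of "a/b"] nz nab
    by (simp add: cis_conv_exp sgn_div_norm)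
  define q :: int where "q = (if v = 1 then 1 else 0)"
  have Q: "(-1) powi q = - v" "(-1) powi (q + 1) = v" using v(1) by (auto simp: q_def)
  have z1: "cmod (2 * b) = 1" using nb by (simp add: norm_mult)
  have g1: "a = 2 * b * (exp (\<i> * of_real \<phi>) / 2)" unfolding E using nz by simp
  have g2: "b = 2 * b * (1 / 2)" by simp
  have g3: "c = 2 * b * ((-1) powi q / 2)" unfolding Q v(3) by simp
  have g4: "e = 2 * b * ((-1) powi (q + 1) / 2 * exp (\<i> * of_real \<phi>))"
    unfolding Q E v(2) using nz by simp
  show ?thesis using z1 g1 g2 g3 g4 by blast
qed
lemma alg_bwd:
  fixes a b c e z :: complex
  assumes z: "cmod z = 1"
    and ha: "a = z * (exp (\<i> * of_real \<phi>) / 2)"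
    and hb: "b = z * (1 / 2)"
    and hc: "c = z * ((-1) powi q / 2)"
    and he: "e = z * ((-1) powi (q + 1) / 2 * exp (\<i> * of_real \<phi>))"
  shows "a \<noteq> 0 \<and> b \<noteq> 0 \<and> c \<noteq> 0 \<and> e \<noteq> 0 \<and>
    cnj a * a + cnj b * b + cnj c * c + cnj e * e = 1 \<and>
    cnj a * c + cnj e * b = 0 \<and>
    cnj b * a + cnj c * e = 0 \<and>
    cnj a * e + cnj c * b + cnj e * a + cnj b * c = 0"
proof -
  have unit: "cnj w = 1 / w \<and> w \<noteq> 0" if "cmod w = 1" for w :: complex
  proof -
    have "complex_of_real ((cmod w)^2) = w * cnj w" by (rule complex_norm_square)
    hence "w * cnj w = 1" using that by simp
    thus ?thesis by (metis mult_zero_left nonzero_eq_divide_eq zero_neq_one mult.commute)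
  qed
  define E where "E = exp (\<i> * of_real \<phi>)"
  have cz: "cnj z = 1 / z" "z \<noteq> 0" using unit[OF z] by auto
  have cE: "cnj E = 1 / E" "E \<noteq> 0" using unit[of E] unfolding E_def by auto
  have ha': "a = z * (E / 2)" and he': "e = z * ((-1) powi (q + 1) / 2 * E)"
    using ha he unfolding E_def by auto
  show ?thesis
  proof (cases "even q")
    case True
    hence s: "(-1::complex) powi q = 1" "(-1::complex) powi (q + 1) = -1"
      by (auto simp: power_int_minus_left)
    show ?thesis unfolding ha' hb hc he' s using cz cE
      by (simp add: field_simps)
  next
    case False
    hence s: "(-1::complex) powi q = -1" "(-1::complex) powi (q + 1) = 1"
      by (auto simp: power_int_minus_left)
    show ?thesis unfolding ha' hb hc he' s using cz cE
      by (simp add: field_simps)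
  qed
qed

theorem mainTheorem11:
  fixes W :: "6 \<Rightarrow> complex"
  shows "homogeneous_scalar_qw {1, -1, 2, -2} W \<longleftrightarrow>
    (\<exists>z::complex. cmod z = 1 \<and> (\<exists>(\<phi>::real) (q::int).
       W 1 = z * (exp (\<i> * of_real \<phi>) / 2) \<and>
       W (-1) = z * (1 / 2) \<and>
       W 2 = z * ((-1) powi q / 2) \<and>
       W (-2) = z * ((-1) powi (q + 1) / 2 * exp (\<i> * of_real \<phi>))))"
proof -
  have m1: "(-1::6) = 5" "(-2::6) = 4" by simp_all
  have H: "homogeneous_scalar_qw {1, -1, 2, -2} W \<longleftrightarrow>
     (W 1 \<noteq> 0 \<and> W 5 \<noteq> 0 \<and> W 2 \<noteq> 0 \<and> W 4 \<noteq> 0) \<and>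
     (R W 0 = 1 \<and> R W 1 = 0 \<and> R W 2 = 0 \<and> R W 3 = 0)"
    unfolding homogeneous_scalar_qw_def unitary_iff2 by (simp add: m1)
  have fwd: "\<exists>z::complex. cmod z = 1 \<and> (\<exists>(\<phi>::real) (q::int).
       W 1 = z * (exp (\<i> * of_real \<phi>) / 2) \<and>
       W 5 = z * (1 / 2) \<and>
       W 2 = z * ((-1) powi q / 2) \<and>
       W 4 = z * ((-1) powi (q + 1) / 2 * exp (\<i> * of_real \<phi>)))" if h: "(W 1 \<noteq> 0 \<and> W 5 \<noteq> 0 \<and> W 2 \<noteq> 0 \<and> W 4 \<noteq> 0) \<and>
      (cnj (W 1) * W 1 + cnj (W 5) * W 5 + cnj (W 2) * W 2 + cnj (W 4) * W 4 = 1 \<and>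
       cnj (W 1) * W 2 + cnj (W 4) * W 5 = 0 \<and>
       cnj (W 5) * W 1 + cnj (W 2) * W 4 = 0 \<and>
       cnj (W 1) * W 4 + cnj (W 2) * W 5 + cnj (W 4) * W 1 + cnj (W 5) * W 2 = 0)"
    using h by (intro alg_fwd) auto
  have bwd: "(W 1 \<noteq> 0 \<and> W 5 \<noteq> 0 \<and> W 2 \<noteq> 0 \<and> W 4 \<noteq> 0) \<and>
      (cnj (W 1) * W 1 + cnj (W 5) * W 5 + cnj (W 2) * W 2 + cnj (W 4) * W 4 = 1 \<and>
       cnj (W 1) * W 2 + cnj (W 4) * W 5 = 0 \<and>
       cnj (W 5) * W 1 + cnj (W 2) * W 4 = 0 \<and>
       cnj (W 1) * W 4 + cnj (W 2) * W 5 + cnj (W 4) * W 1 + cnj (W 5) * W 2 = 0)" if h: "\<exists>z::complex. cmod z = 1 \<and> (\<exists>(\<phi>::real) (q::int).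
       W 1 = z * (exp (\<i> * of_real \<phi>) / 2) \<and>
       W 5 = z * (1 / 2) \<and>
       W 2 = z * ((-1) powi q / 2) \<and>
       W 4 = z * ((-1) powi (q + 1) / 2 * exp (\<i> * of_real \<phi>)))"
  proof -
    from h obtain z \<phi> q where "cmod z = 1"
       "W 1 = z * (exp (\<i> * of_real \<phi>) / 2)"
       "W 5 = z * (1 / 2)"
       "W 2 = z * ((-1) powi q / 2)"
       "W 4 = z * ((-1) powi (q + 1) / 2 * exp (\<i> * of_real \<phi>))" by blast
    from alg_bwd[OF this] show ?thesis by blast
  qed
  show ?thesis
    unfolding H R_vals(1-4) unfolding m1 using fwd bwd by blast
qed

end
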